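(* Let $X$ be a Banach space with a normalized $1$-unconditional basis $(e_i)_i$ not equivalent to the standard basis of $c_0$, let $q\le p$ in $[1,\infty]$, $q<\infty$, be such that $X$ satisfies lower $p$ and upper $q$ estimates on block sequences with constant one, and let $X_k=\mathrm{span}\{e_1,\dots,e_k\}$. Fix $d\in\mathbb{N}$ and $0<\varepsilon\le1$. Let $P\subseteq\mathbb{N}$ and $M=\{k_j\}_{j=1}^\infty\subseteq\mathbb{N}$ satisfy Assumption $A(d,\varepsilon/4)$. Then for all $\bar m\in[\{k_{2j}\}_{j=1}^\infty]^d$, all $k\in\{k_{2j}\}_{j=1}^\infty$ with $k>m_d$, and all step preserving maps $F\colon S^+_{\ell_\infty^k}\to S^+_{X_k}$ with $\omega_F(\tfrac1d)\le\tfrac\varepsilon8$, we have \[\Big\|F(z(\bar m))-\frac1{\psi(k)}\sum_{i=1}^ke_i\Big\|_X\le\varepsilon.\]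
   Context: Identify $X_k$ with $\mathbb{R}^k$ via $(e_i)$; $1_A=\sum_{i\in A}e_i$, $1_{(a,b]}=1_{\{i:a<i\le b\}}$. $S^+_{\ell_\infty^k}=\{x\in\mathbb{R}^k:\|x\|_\infty=1,x_i\ge0\}$, $S^+_{X_k}=\{\sum_{i\le k}a_ie_i:\|\cdot\|_X=1,a_i\ge0\}$. $\psi(k)=\|1_{[1,k]}\|_X$; $\psi_P(k)=\min\{\|1_{[1,k]\cap P}\|_X,\|1_{[1,k]\cap P^c}\|_X\}$. Lower $p$/upper $q$ estimates with constant one: $(\sum\|x_i\|^p)^{1/p}\le\|\sum x_i\|\le(\sum\|x_i\|^q)^{1/q}$ for every block sequence. Assumption $A(d,\varepsilon)$ for $P$ and $M=\{k_j\}$ ($k_1<k_2<\cdots$): (i) $\psi_P(k)\ge\frac12(\psi(k)-1)$ for all $k$; (ii) $(k_j,k_{j+1}]$ meets both $P$ and $P^c$ for all $j$; (iii) $\psi(k_{j+1})\ge(\frac{8d^{1/q-1/p}}{\varepsilon}+2)\psi(k_j)+1$. $[S]^d$ denotes increasing $d$-tuples from $S$; with $m_0=0$, $z(\bar m)=\sum_{s=1}^d(1-\frac{s-1}{d})1_{(m_{s-1},m_s]}$. $F=(F_i)$ is step preserving if $x_i=x_j$ implies $F_i(x)=F_j(x)$. $\omega_F(t)=\sup\{\|F(x)-F(y)\|_X:\|x-y\|_\infty\le t\}$. *)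

theory Defs
  imports "HOL-Analysis.Analysis"
begin

text \<open>The basis is e 1, e 2, ... (index 0 is unused). Vectors of R^k are
  coefficient functions nat => real vanishing outside {1..k}.\<close>

definition schauder_basis :: "(nat \<Rightarrow> 'a::banach) \<Rightarrow> bool" where
  "schauder_basis e \<longleftrightarrow>
     (\<forall>x. \<exists>!a. a 0 = 0 \<and> (\<lambda>i. a (Suc i) *\<^sub>R e (Suc i)) sums x)"

definition normalized_basis :: "(nat \<Rightarrow> 'a::real_normed_vector) \<Rightarrow> bool" where
  "normalized_basis e \<longleftrightarrow> (\<forall>i\<ge>1. norm (e i) = 1)"

definition one_unconditional :: "(nat \<Rightarrow> 'a::real_normed_vector) \<Rightarrow> bool" where
  "one_unconditional e \<longleftrightarrow>
     (\<forall>n (a::nat\<Rightarrow>real) (s::nat\<Rightarrow>real). (\<forall>i. s i \<in> {-1, 1}) \<longrightarrow>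
        norm (\<Sum>i=1..n. (s i * a i) *\<^sub>R e i) = norm (\<Sum>i=1..n. a i *\<^sub>R e i))"

definition equiv_c0_basis :: "(nat \<Rightarrow> 'a::real_normed_vector) \<Rightarrow> bool" where
  "equiv_c0_basis e \<longleftrightarrow> (\<exists>C>0. \<forall>n\<ge>1. \<forall>a::nat\<Rightarrow>real.
      (1/C) * (MAX i\<in>{1..n}. \<bar>a i\<bar>) \<le> norm (\<Sum>i=1..n. a i *\<^sub>R e i) \<and>
      norm (\<Sum>i=1..n. a i *\<^sub>R e i) \<le> C * (MAX i\<in>{1..n}. \<bar>a i\<bar>))"

definition block_seq :: "(nat \<Rightarrow> 'a::real_normed_vector) \<Rightarrow> nat \<Rightarrow> (nat \<Rightarrow> 'a) \<Rightarrow> bool" where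
  "block_seq e n x \<longleftrightarrow> (\<exists>b::nat\<Rightarrow>nat. mono b \<and>
      (\<forall>i<n. x i \<in> span (e ` {b i<..b (Suc i)})))"

definition lower_estimate :: "(nat \<Rightarrow> 'a::real_normed_vector) \<Rightarrow> ereal \<Rightarrow> bool" where
  "lower_estimate e p \<longleftrightarrow> (\<forall>n x. block_seq e n x \<longrightarrow>
      (if p = \<infinity> then (\<forall>i<n. norm (x i) \<le> norm (\<Sum>i<n. x i))
       else (\<Sum>i<n. norm (x i) powr real_of_ereal p) powr (1 / real_of_ereal p)
              \<le> norm (\<Sum>i<n. x i)))"

definition upper_estimate :: "(nat \<Rightarrow> 'a::real_normed_vector) \<Rightarrow> real \<Rightarrow> bool" where
  "upper_estimate e q \<longleftrightarrow> (\<forall>n x. block_seq e n x \<longrightarrow>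
      norm (\<Sum>i<n. x i) \<le> (\<Sum>i<n. norm (x i) powr q) powr (1 / q))"

definition inv_ereal_exp :: "ereal \<Rightarrow> real" where
  "inv_ereal_exp p = (if p = \<infinity> then 0 else 1 / real_of_ereal p)"

definition vec :: "(nat \<Rightarrow> 'a::real_normed_vector) \<Rightarrow> nat \<Rightarrow> (nat \<Rightarrow> real) \<Rightarrow> 'a" where
  "vec e k x = (\<Sum>i=1..k. x i *\<^sub>R e i)"

definition ind :: "nat set \<Rightarrow> nat \<Rightarrow> real" where
  "ind A = (\<lambda>i. if i \<in> A then 1 else 0)"

definition psi :: "(nat \<Rightarrow> 'a::real_normed_vector) \<Rightarrow> nat \<Rightarrow> real" where
  "psi e k = norm (\<Sum>i\<in>{1..k}. e i)"

definition psiP :: "(nat \<Rightarrow> 'a::real_normed_vector) \<Rightarrow> nat set \<Rightarrow> nat \<Rightarrow> real" where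
  "psiP e P k = min (norm (\<Sum>i\<in>{1..k} \<inter> P. e i)) (norm (\<Sum>i\<in>{1..k} - P. e i))"

text \<open>Assumption A(d,eps) for P and M = {kk j | j >= 1}, kk strictly increasing.\<close>
definition assumptionA ::
  "(nat \<Rightarrow> 'a::real_normed_vector) \<Rightarrow> ereal \<Rightarrow> real \<Rightarrow> nat \<Rightarrow> real \<Rightarrow> nat set \<Rightarrow> (nat \<Rightarrow> nat) \<Rightarrow> bool" where
  "assumptionA e p q d eps P kk \<longleftrightarrow>
     (\<forall>k. psiP e P k \<ge> (psi e k - 1) / 2) \<and>
     (\<forall>j\<ge>1. {kk j<..kk (Suc j)} \<inter> P \<noteq> {} \<and> {kk j<..kk (Suc j)} - P \<noteq> {}) \<and>
     (\<forall>j\<ge>1. psi e (kk (Suc j)) \<ge>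
         (8 * real d powr (1/q - inv_ereal_exp p) / eps + 2) * psi e (kk j) + 1)"

definition zvec :: "nat \<Rightarrow> (nat \<Rightarrow> nat) \<Rightarrow> nat \<Rightarrow> real" where
  "zvec d m = (\<lambda>i. \<Sum>s=1..d. (1 - (real s - 1) / real d) *
       ind {(if s = 1 then 0 else m (s - 1))<..m s} i)"

definition pos_sphere_linf :: "nat \<Rightarrow> (nat \<Rightarrow> real) set" where
  "pos_sphere_linf k = {x. (\<forall>i. i \<notin> {1..k} \<longrightarrow> x i = 0) \<and> (\<forall>i. x i \<ge> 0) \<and>
       (MAX i\<in>{1..k}. \<bar>x i\<bar>) = 1}"

definition pos_sphere_X :: "(nat \<Rightarrow> 'a::real_normed_vector) \<Rightarrow> nat \<Rightarrow> (nat \<Rightarrow> real) set" where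
  "pos_sphere_X e k = {a. (\<forall>i. i \<notin> {1..k} \<longrightarrow> a i = 0) \<and> (\<forall>i. a i \<ge> 0) \<and>
       norm (vec e k a) = 1}"

definition step_preserving :: "nat \<Rightarrow> ((nat \<Rightarrow> real) \<Rightarrow> (nat \<Rightarrow> real)) \<Rightarrow> bool" where
  "step_preserving k F \<longleftrightarrow> (\<forall>x\<in>pos_sphere_linf k. \<forall>i\<in>{1..k}. \<forall>j\<in>{1..k}.
       x i = x j \<longrightarrow> F x i = F x j)"

definition dist_inf :: "nat \<Rightarrow> (nat \<Rightarrow> real) \<Rightarrow> (nat \<Rightarrow> real) \<Rightarrow> real" where
  "dist_inf k x y = (MAX i\<in>{1..k}. \<bar>x i - y i\<bar>)"

definition modulus :: "(nat \<Rightarrow> 'a::real_normed_vector) \<Rightarrow> nat \<Rightarrow> ((nat \<Rightarrow> real) \<Rightarrow> (nat \<Rightarrow> real)) \<Rightarrow> real \<Rightarrow> real" where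
  "modulus e k F t = (SUP xy \<in> {(x, y). x \<in> pos_sphere_linf k \<and> y \<in> pos_sphere_linf k \<and>
       dist_inf k x y \<le> t}. norm (vec e k (F (fst xy)) - vec e k (F (snd xy))))"

end

theory Submission
  imports Defs
begin


lemma flip_one:
  fixes e :: "nat \<Rightarrow> 'a::real_normed_vector"
  assumes u: "one_unconditional e" and t: "-1 \<le> t" "t \<le> 1"
  shows "norm (\<Sum>i=1..n. (if i = j then t * c i else c i) *\<^sub>R e i) \<le> norm (\<Sum>i=1..n. c i *\<^sub>R e i)"
proof -
  define s where "s = (\<lambda>i::nat. if i = j then -1 else (1::real))"
  have h: "norm (\<Sum>i=1..n. (s i * c i) *\<^sub>R e i) = norm (\<Sum>i=1..n. c i *\<^sub>R e i)"
    using u unfolding one_unconditional_def s_def by auto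
  have eq: "(\<Sum>i=1..n. (if i = j then t * c i else c i) *\<^sub>R e i) =
     ((1+t)/2) *\<^sub>R (\<Sum>i=1..n. c i *\<^sub>R e i) + ((1-t)/2) *\<^sub>R (\<Sum>i=1..n. (s i * c i) *\<^sub>R e i)"
  proof -
    have "(\<Sum>i=1..n. (if i = j then t * c i else c i) *\<^sub>R e i) =
       (\<Sum>i=1..n. ((1+t)/2) *\<^sub>R (c i *\<^sub>R e i) + ((1-t)/2) *\<^sub>R ((s i * c i) *\<^sub>R e i))"
    proof (rule sum.cong)
      fix i assume "i \<in> {1..n}"
      have "(if i = j then t * c i else c i) = (1+t)/2 * c i + (1-t)/2 * (s i * c i)"
        by (auto simp: s_def field_simps)
      then show "(if i = j then t * c i else c i) *\<^sub>R e i = ((1+t)/2) *\<^sub>R (c i *\<^sub>R e i) + ((1-t)/2) *\<^sub>R ((s i * c i) *\<^sub>R e i)"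
        by (simp add: scaleR_add_left)
    qed simp
    also have "\<dots> = ((1+t)/2) *\<^sub>R (\<Sum>i=1..n. c i *\<^sub>R e i) + ((1-t)/2) *\<^sub>R (\<Sum>i=1..n. (s i * c i) *\<^sub>R e i)"
      by (simp add: sum.distrib scaleR_sum_right)
    finally show ?thesis .
  qed
  have "norm (((1+t)/2) *\<^sub>R (\<Sum>i=1..n. c i *\<^sub>R e i) + ((1-t)/2) *\<^sub>R (\<Sum>i=1..n. (s i * c i) *\<^sub>R e i))
     \<le> norm (((1+t)/2) *\<^sub>R (\<Sum>i=1..n. c i *\<^sub>R e i)) + norm (((1-t)/2) *\<^sub>R (\<Sum>i=1..n. (s i * c i) *\<^sub>R e i))"
    by (rule norm_triangle_ineq)
  also have "\<dots> = ((1+t)/2) * norm (\<Sum>i=1..n. c i *\<^sub>R e i) + ((1-t)/2) * norm (\<Sum>i=1..n. c i *\<^sub>R e i)"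
    using t h by simp
  also have "\<dots> = norm (\<Sum>i=1..n. c i *\<^sub>R e i)" by (simp add: field_simps)
  finally show ?thesis using eq by simp
qed

lemma flip_set:
  fixes e :: "nat \<Rightarrow> 'a::real_normed_vector"
  assumes u: "one_unconditional e" and J: "finite J" and t: "\<And>i. -1 \<le> t i \<and> t i \<le> 1"
  shows "norm (\<Sum>i=1..n. (if i \<in> J then t i * c i else c i) *\<^sub>R e i) \<le> norm (\<Sum>i=1..n. c i *\<^sub>R e i)"
  using J
proof (induction J rule: finite_induct)
  case empty
  then show ?case by simp
next
  case (insert j J)
  define c' where "c' = (\<lambda>i. if i \<in> J then t i * c i else c i)"
  have feq: "\<And>i. (if i \<in> insert j J then t i * c i else c i) = (if i = j then t j * c' i else c' i)"
    using insert.hyps by (auto simp: c'_def)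
  have "norm (\<Sum>i=1..n. (if i \<in> insert j J then t i * c i else c i) *\<^sub>R e i)
      = norm (\<Sum>i=1..n. (if i = j then t j * c' i else c' i) *\<^sub>R e i)" by (simp only: feq)
  also have "\<dots> \<le> norm (\<Sum>i=1..n. c' i *\<^sub>R e i)"
    using flip_one[OF u, of "t j"] t by blast
  also have "\<dots> \<le> norm (\<Sum>i=1..n. c i *\<^sub>R e i)" using insert.IH by (simp add: c'_def)
  finally show ?case .
qed

lemma uncond_mono:
  fixes e :: "nat \<Rightarrow> 'a::real_normed_vector"
  assumes u: "one_unconditional e" and ab: "\<And>i. i \<in> {1..n} \<Longrightarrow> \<bar>a i\<bar> \<le> \<bar>b i\<bar>"
  shows "norm (\<Sum>i=1..n. a i *\<^sub>R e i) \<le> norm (\<Sum>i=1..n. b i *\<^sub>R e i)"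
proof -
  define t where "t = (\<lambda>i. if i \<in> {1..n} \<and> b i \<noteq> 0 then a i / b i else 0)"
  have t1: "-1 \<le> t i \<and> t i \<le> 1" for i
  proof (cases "i \<in> {1..n} \<and> b i \<noteq> 0")
    case True
    then have "\<bar>a i\<bar> / \<bar>b i\<bar> \<le> 1" using ab[of i] by (simp add: divide_le_eq)
    then have "\<bar>a i / b i\<bar> \<le> 1" by (simp add: abs_divide)
    then have "-1 \<le> a i / b i \<and> a i / b i \<le> 1" using abs_le_iff[of "a i / b i" 1] by linarith
    then show ?thesis using True unfolding t_def by presburger
  qed (auto simp: t_def)
  have "(\<Sum>i=1..n. a i *\<^sub>R e i) = (\<Sum>i=1..n. (if i \<in> {1..n} then t i * b i else b i) *\<^sub>R e i)"
  proof (rule sum.cong)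
    fix i assume i: "i \<in> {1..n}"
    show "a i *\<^sub>R e i = (if i \<in> {1..n} then t i * b i else b i) *\<^sub>R e i"
    proof (cases "b i = 0")
      case True then have "a i = 0" using ab[OF i] by simp
      then show ?thesis using i True by simp
    qed (use i in \<open>simp add: t_def\<close>)
  qed simp
  also have "norm \<dots> \<le> norm (\<Sum>i=1..n. b i *\<^sub>R e i)"
    by (rule flip_set[OF u _ t1]) simp
  finally show ?thesis .
qed



lemma powr_convex0:
  fixes r :: real assumes r: "r \<ge> 1"
  shows "convex_on {0..} (\<lambda>x::real. x powr r)"
proof (rule convex_on_linorderI)
  fix t x y :: real
  assume t: "0 < t" "t < 1" and x: "x \<in> {0..}" and y: "y \<in> {0..}" and xy: "x < y"
  show "((1 - t) *\<^sub>R x + t *\<^sub>R y) powr r \<le> (1 - t) * x powr r + t * y powr r"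
  proof (cases "x = 0")
    case True
    have "(t * y) powr r = t powr r * y powr r" using t y by (simp add: powr_mult)
    also have "\<dots> \<le> t powr 1 * y powr r"
      by (rule mult_right_mono) (use t r powr_mono'[of 1 r t] in auto)
    finally show ?thesis using True t by simp
  next
    case False
    then have "x \<in> {0<..}" "y \<in> {0<..}" using x y xy by auto
    then show ?thesis using convex_onD[OF powr_convex[OF r], of t x y] t by simp
  qed
qed (simp add: convex_real_interval)

lemma power_mean:
  fixes y :: "'b \<Rightarrow> real"
  assumes S: "finite S" "S \<noteq> {}" and y: "\<And>s. s \<in> S \<Longrightarrow> y s \<ge> 0"
    and q: "1 \<le> q" and qp: "q \<le> p"
  shows "(\<Sum>s\<in>S. y s powr q) powr (1/q) \<le> real (card S) powr (1/q - 1/p) * (\<Sum>s\<in>S. y s powr p) powr (1/p)"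
proof -
  define n where "n = real (card S)"
  have n: "n > 0" using S by (simp add: n_def card_gt_0_iff)
  define r where "r = p / q"
  have r: "r \<ge> 1" using q qp by (simp add: r_def)
  have p: "p > 0" using q qp by simp
  define Y where "Y = (\<lambda>s. y s powr q)"
  have Y0: "Y s \<ge> 0" for s by (simp add: Y_def)
  have YS: "(\<Sum>s\<in>S. Y s) \<ge> 0" by (simp add: sum_nonneg Y0)
  have Yr: "Y s powr r = y s powr p" if "s \<in> S" for s
    using y[OF that] q by (simp add: Y_def powr_powr r_def)
  have J: "(\<Sum>s\<in>S. (1/n) *\<^sub>R Y s) powr r \<le> (\<Sum>s\<in>S. (1/n) * Y s powr r)"
    by (rule convex_on_sum[OF S powr_convex0[OF r]]) (use n in \<open>auto simp: n_def Y0\<close>)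
  have "(\<Sum>s\<in>S. (1/n) *\<^sub>R Y s) = (\<Sum>s\<in>S. Y s) / n"
    by (simp add: sum_divide_distrib)
  moreover have "(\<Sum>s\<in>S. (1/n) * Y s powr r) = (\<Sum>s\<in>S. y s powr p) / n"
    using Yr by (simp add: sum_divide_distrib)
  ultimately have "((\<Sum>s\<in>S. Y s) / n) powr r \<le> (\<Sum>s\<in>S. y s powr p) / n" using J by simp
  then have "(\<Sum>s\<in>S. Y s) powr r / n powr r \<le> (\<Sum>s\<in>S. y s powr p) / n"
    using YS n by (simp add: powr_divide)
  then have "(\<Sum>s\<in>S. Y s) powr r \<le> n powr r * ((\<Sum>s\<in>S. y s powr p) / n)"
    using n by (simp add: divide_le_eq mult.commute)
  also have "\<dots> = n powr (r - 1) * (\<Sum>s\<in>S. y s powr p)"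
    using n by (simp add: powr_diff)
  finally have A: "(\<Sum>s\<in>S. Y s) powr r \<le> n powr (r - 1) * (\<Sum>s\<in>S. y s powr p)" .
  have "((\<Sum>s\<in>S. Y s) powr r) powr (1/p) \<le> (n powr (r - 1) * (\<Sum>s\<in>S. y s powr p)) powr (1/p)"
    by (rule powr_mono2) (use A p in auto)
  moreover have "((\<Sum>s\<in>S. Y s) powr r) powr (1/p) = (\<Sum>s\<in>S. Y s) powr (1/q)"
    using p q by (simp add: powr_powr r_def)
  moreover have "(n powr (r - 1) * (\<Sum>s\<in>S. y s powr p)) powr (1/p) = n powr (1/q - 1/p) * (\<Sum>s\<in>S. y s powr p) powr (1/p)"
  proof -
    have "(n powr (r - 1) * (\<Sum>s\<in>S. y s powr p)) powr (1/p) = (n powr (r - 1)) powr (1/p) * (\<Sum>s\<in>S. y s powr p) powr (1/p)"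
      using n by (simp add: powr_mult sum_nonneg)
    moreover have "(n powr (r - 1)) powr (1/p) = n powr (1/q - 1/p)"
      using p q by (simp add: powr_powr r_def field_simps)
    ultimately show ?thesis by simp
  qed
  ultimately show ?thesis by (simp add: Y_def n_def)
qed



lemma set_sum_vec:
  fixes e :: "nat \<Rightarrow> 'a::real_vector"
  assumes "B \<subseteq> {1..n}"
  shows "(\<Sum>i\<in>B. c i *\<^sub>R e i) = (\<Sum>i=1..n. (if i \<in> B then c i else 0) *\<^sub>R e i)"
proof -
  have "(\<Sum>i=1..n. (if i \<in> B then c i else 0) *\<^sub>R e i) = (\<Sum>i\<in>{1..n}. if i \<in> B then c i *\<^sub>R e i else 0)"
    by (rule sum.cong) auto
  also have "\<dots> = (\<Sum>i\<in>{1..n} \<inter> B. c i *\<^sub>R e i)"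
    by (simp add: sum.inter_restrict)
  also have "{1..n} \<inter> B = B" using assms by auto
  finally show ?thesis by simp
qed

lemma sub_mono:
  fixes e :: "nat \<Rightarrow> 'a::real_normed_vector"
  assumes u: "one_unconditional e" and AB: "A \<subseteq> B" "B \<subseteq> {1..n}"
    and c: "\<And>i. i \<in> A \<Longrightarrow> \<bar>c i\<bar> \<le> \<bar>c' i\<bar>"
  shows "norm (\<Sum>i\<in>A. c i *\<^sub>R e i) \<le> norm (\<Sum>i\<in>B. c' i *\<^sub>R e i)"
proof -
  have "norm (\<Sum>i\<in>A. c i *\<^sub>R e i) = norm (\<Sum>i=1..n. (if i \<in> A then c i else 0) *\<^sub>R e i)"
    using AB by (simp add: set_sum_vec[of A n])
  also have "\<dots> \<le> norm (\<Sum>i=1..n. (if i \<in> B then c' i else 0) *\<^sub>R e i)"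
    by (rule uncond_mono[OF u]) (use AB c in auto)
  also have "\<dots> = norm (\<Sum>i\<in>B. c' i *\<^sub>R e i)"
    using AB by (simp add: set_sum_vec[of B n])
  finally show ?thesis .
qed

lemma sub_mono1:
  fixes e :: "nat \<Rightarrow> 'a::real_normed_vector"
  assumes u: "one_unconditional e" and AB: "A \<subseteq> B" "B \<subseteq> {1..n}"
  shows "norm (\<Sum>i\<in>A. e i) \<le> norm (\<Sum>i\<in>B. e i)"
  using sub_mono[OF u AB, of "\<lambda>_. 1" "\<lambda>_. 1"] by simp

lemma block_in_span:
  fixes e :: "nat \<Rightarrow> 'a::real_vector"
  assumes "A \<subseteq> {a<..b}"
  shows "(\<Sum>i\<in>A. c i *\<^sub>R e i) \<in> span (e ` {a<..b})"
  by (intro span_sum span_scale span_base) (use assms in auto)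

lemma lower_to_D:
  fixes e :: "nat \<Rightarrow> 'a::real_normed_vector"
  assumes low: "lower_estimate e p" and qp: "ereal q \<le> p" and q: "1 \<le> q"
    and bs: "block_seq e n x" and n: "n \<ge> 1" and nb: "norm (\<Sum>i<n. x i) \<le> 1"
  shows "(\<Sum>i<n. norm (x i) powr q) powr (1/q) \<le> real n powr (1/q - inv_ereal_exp p)"
proof (cases "p = \<infinity>")
  case True
  then have each: "norm (x i) \<le> 1" if "i < n" for i
    using low bs nb that unfolding lower_estimate_def by force
  have "(\<Sum>i<n. norm (x i) powr q) \<le> (\<Sum>i<n. 1)"
  proof (rule sum_mono)
    fix i assume "i \<in> {..<n}"
    then show "norm (x i) powr q \<le> 1" using powr_mono2[of q "norm (x i)" 1] each[of i] q by simp
  qed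
  then have "(\<Sum>i<n. norm (x i) powr q) \<le> real n" by simp
  then have "(\<Sum>i<n. norm (x i) powr q) powr (1/q) \<le> real n powr (1/q)"
    using powr_mono2[of "1/q" "(\<Sum>i<n. norm (x i) powr q)" "real n"] q by (simp add: sum_nonneg)
  then show ?thesis using True by (simp add: inv_ereal_exp_def)
next
  case False
  define p' where "p' = real_of_ereal p"
  have pe: "p = ereal p'" using False qp unfolding p'_def
    by (cases p) auto
  have qp': "q \<le> p'" using qp pe by simp
  have "(\<Sum>i<n. norm (x i) powr p') powr (1 / p') \<le> norm (\<Sum>i<n. x i)"
    using low bs False unfolding lower_estimate_def p'_def by auto
  then have L: "(\<Sum>i<n. norm (x i) powr p') powr (1 / p') \<le> 1" using nb by linarith
  have "(\<Sum>i<n. norm (x i) powr q) powr (1/q) \<le> real (card {..<n}) powr (1/q - 1/p') * (\<Sum>i<n. norm (x i) powr p') powr (1/p')"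
    by (rule power_mean) (use n q qp' in \<open>auto simp: lessThan_empty_iff\<close>)
  also have "\<dots> \<le> real n powr (1/q - 1/p') * 1"
    using mult_left_mono[OF L, of "real n powr (1/q - 1/p')"] by simp
  finally show ?thesis using False by (simp add: inv_ereal_exp_def p'_def)
qed

lemma final_ineq:
  fixes Y SR SB :: "'a::real_normed_vector"
  assumes a: "a \<ge> 0" and G: "norm (Y + a *\<^sub>R SB) = 1" and aSB: "norm (a *\<^sub>R SB) \<le> 1"
    and Y: "norm Y \<le> eta" and SR: "norm SR \<le> r" and ps: "ps > 0"
    and SB1: "ps - r \<le> norm SB" and SB2: "norm SB \<le> ps"
  shows "norm ((Y + a *\<^sub>R SB) - (1/ps) *\<^sub>R (SR + SB)) \<le> 2 * eta + 2 * (r / ps)"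
proof -
  have eq: "(Y + a *\<^sub>R SB) - (1/ps) *\<^sub>R (SR + SB) = Y - (1/ps) *\<^sub>R SR + (a - 1/ps) *\<^sub>R SB"
    by (simp add: algebra_simps)
  have n1: "norm Y \<le> eta" by (fact Y)
  have n2: "norm ((1/ps) *\<^sub>R SR) \<le> r / ps" using SR ps by (simp add: divide_right_mono)
  have h1: "1 - eta \<le> a * norm SB"
    using norm_triangle_ineq[of Y "a *\<^sub>R SB"] G Y a by simp
  have h2: "a * norm SB \<le> 1" using aSB a by simp
  have "(ps - r) / ps \<le> norm SB / ps" by (rule divide_right_mono) (use SB1 ps in auto)
  moreover have "1 - r / ps = (ps - r) / ps" using ps by (simp add: field_simps)
  ultimately have h3: "1 - r / ps \<le> norm SB / ps" by simp
  have h4: "norm SB / ps \<le> 1" using SB2 ps by simp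
  have "norm ((a - 1/ps) *\<^sub>R SB) = \<bar>a * norm SB - norm SB / ps\<bar>"
  proof -
    have "a * norm SB - norm SB / ps = (a - 1/ps) * norm SB" by (simp add: algebra_simps)
    then show ?thesis by (simp only: norm_scaleR abs_mult abs_norm_cancel)
  qed
  also have "\<dots> \<le> eta + r / ps"
  proof -
    have "0 \<le> eta" using Y norm_ge_zero[of Y] by linarith
    moreover have "0 \<le> r" using SR norm_ge_zero[of SR] by linarith
    then have "0 \<le> r / ps" using ps by simp
    ultimately show ?thesis unfolding abs_le_iff using h1 h2 h3 h4 by linarith
  qed
  finally have n3: "norm ((a - 1/ps) *\<^sub>R SB) \<le> eta + r / ps" .
  have "norm (Y - (1/ps) *\<^sub>R SR + (a - 1/ps) *\<^sub>R SB) \<le> norm Y + norm ((1/ps) *\<^sub>R SR) + norm ((a - 1/ps) *\<^sub>R SB)"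
    by (smt (verit) norm_triangle_ineq norm_triangle_ineq4)
  then have "norm (Y - (1/ps) *\<^sub>R SR + (a - 1/ps) *\<^sub>R SB) \<le> 2 * eta + 2 * (r / ps)"
    using n1 n2 n3 by linarith
  then show ?thesis by (simp only: eq)
qed



lemma sphere_intro:
  assumes k: "k \<ge> 1" and out: "\<And>i. i \<notin> {1..k} \<Longrightarrow> x i = 0"
    and rng: "\<And>i. 0 \<le> x i \<and> x i \<le> 1" and one: "x 1 = 1"
  shows "x \<in> pos_sphere_linf k"
proof -
  have "(MAX i\<in>{1..k}. \<bar>x i\<bar>) = 1"
  proof (rule Max_eqI)
    show "finite ((\<lambda>i. \<bar>x i\<bar>) ` {1..k})" by simp
    show "\<And>y. y \<in> (\<lambda>i. \<bar>x i\<bar>) ` {1..k} \<Longrightarrow> y \<le> 1" using rng by auto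
    show "1 \<in> (\<lambda>i. \<bar>x i\<bar>) ` {1..k}" using k one by (auto intro!: image_eqI[of _ _ 1])
  qed
  then show ?thesis using out rng unfolding pos_sphere_linf_def by auto
qed

lemma dist_le:
  assumes k: "k \<ge> 1" and h: "\<And>i. i \<in> {1..k} \<Longrightarrow> \<bar>x i - y i\<bar> \<le> t"
  shows "dist_inf k x y \<le> t"
  unfolding dist_inf_def using k h by (subst Max_le_iff) auto

lemma modulus_bound:
  fixes e :: "nat \<Rightarrow> 'a::real_normed_vector"
  assumes Fim: "F ` pos_sphere_linf k \<subseteq> pos_sphere_X e k"
    and x: "x \<in> pos_sphere_linf k" and y: "y \<in> pos_sphere_linf k" and dxy: "dist_inf k x y \<le> t"
  shows "norm (vec e k (F x) - vec e k (F y)) \<le> modulus e k F t"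
proof -
  let ?S = "{(x, y). x \<in> pos_sphere_linf k \<and> y \<in> pos_sphere_linf k \<and> dist_inf k x y \<le> t}"
  let ?f = "\<lambda>xy. norm (vec e k (F (fst xy)) - vec e k (F (snd xy)))"
  have bd: "?f xy \<le> 2" if "xy \<in> ?S" for xy
  proof -
    have "norm (vec e k (F (fst xy))) = 1" "norm (vec e k (F (snd xy))) = 1"
      using that Fim unfolding pos_sphere_X_def by auto
    then show ?thesis using norm_triangle_ineq4[of "vec e k (F (fst xy))" "vec e k (F (snd xy))"] by simp
  qed
  have bda: "bdd_above (?f ` ?S)" by (rule bdd_aboveI2[where M=2]) (rule bd)
  have "?f (x, y) \<le> (SUP xy\<in>?S. ?f xy)"
    by (rule cSUP_upper[OF _ bda]) (use x y dxy in auto)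
  then show ?thesis unfolding modulus_def by simp
qed

lemma sum_powr_scale:
  fixes y :: "'b \<Rightarrow> real"
  assumes a: "a \<ge> 0" and y: "\<And>i. i \<in> S \<Longrightarrow> y i \<ge> 0" and q: "q > 0"
  shows "(\<Sum>i\<in>S. (a * y i) powr q) powr (1/q) = a * (\<Sum>i\<in>S. y i powr q) powr (1/q)"
proof -
  have "(\<Sum>i\<in>S. (a * y i) powr q) = a powr q * (\<Sum>i\<in>S. y i powr q)"
    by (simp add: sum_distrib_left powr_mult a y)
  then have "(\<Sum>i\<in>S. (a * y i) powr q) powr (1/q) = (a powr q) powr (1/q) * (\<Sum>i\<in>S. y i powr q) powr (1/q)"
    by (simp add: powr_mult sum_nonneg)
  also have "(a powr q) powr (1/q) = a" using q a by (simp add: powr_powr)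
  finally show ?thesis .
qed

lemma sum_powr_mono:
  fixes x y :: "'b \<Rightarrow> real"
  assumes xy: "\<And>i. i \<in> S \<Longrightarrow> 0 \<le> x i \<and> x i \<le> y i" and q: "q > 0"
  shows "(\<Sum>i\<in>S. x i powr q) powr (1/q) \<le> (\<Sum>i\<in>S. y i powr q) powr (1/q)"
proof -
  have "(\<Sum>i\<in>S. x i powr q) \<le> (\<Sum>i\<in>S. y i powr q)"
    by (rule sum_mono) (use xy q in \<open>auto intro: powr_mono2\<close>)
  then show ?thesis using q by (intro powr_mono2) (auto intro: sum_nonneg)
qed



lemma arith_fin:
  fixes N om r ee :: real
  assumes "N \<le> 2 * (2 * (om + ee / 16)) + 2 * r" "r \<le> ee / 32" "om \<le> ee / 8" "0 < ee"
  shows "N \<le> ee"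
proof -
  have "2 * (2 * (om + ee / 16)) = 4 * om + ee / 4" by simp
  then show ?thesis using assms by linarith
qed

theorem theorem6p1:
  fixes e :: "nat \<Rightarrow> 'a::banach" and p :: ereal and q :: real
    and d :: nat and eps :: real and P :: "nat set" and kk :: "nat \<Rightarrow> nat"
    and m :: "nat \<Rightarrow> nat" and k :: nat
    and F :: "(nat \<Rightarrow> real) \<Rightarrow> (nat \<Rightarrow> real)"
  assumes "schauder_basis e" and "normalized_basis e" and "one_unconditional e"
    and "\<not> equiv_c0_basis e"
    and "1 \<le> q" and "ereal q \<le> p"
    and "lower_estimate e p" and "upper_estimate e q"
    and "d \<ge> 1" and "0 < eps" and "eps \<le> 1"
    and "strict_mono kk"
    and "assumptionA e p q d (eps / 4) P kk"
    and "\<forall>s\<in>{1..d}. \<exists>j\<ge>1. m s = kk (2 * j)"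
    and "\<forall>s\<in>{1..<d}. m s < m (Suc s)"
    and "\<exists>j\<ge>1. k = kk (2 * j)" and "k > m d"
    and "F ` pos_sphere_linf k \<subseteq> pos_sphere_X e k"
    and "step_preserving k F"
    and "modulus e k F (1 / real d) \<le> eps / 8"
  shows "norm (vec e k (F (zvec d m)) - (1 / psi e k) *\<^sub>R (\<Sum>i=1..k. e i)) \<le> eps"
proof -
  note u = assms(3)
  have d1: "d \<ge> 1" and eps0: "0 < eps" and kkm: "strict_mono kk" using assms by auto
  have q1: "1 \<le> q" and qp: "ereal q \<le> p" using assms by auto
  have kkge: "kk n \<ge> n" for n using kkm by (simp add: strict_mono_imp_increasing)
  define mm where "mm = (\<lambda>s. if s = 0 then 0 else if s \<le> d then m s else k)"
  have mm0: "mm 0 = 0" and mmd: "mm (Suc d) = k" and mmD: "mm d = m d" using d1 by (auto simp: mm_def)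
  have mmkk: "\<exists>j\<ge>1. mm s = kk (2 * j)" if "s \<in> {1..Suc d}" for s
    using that assms(14,16) by (cases "s \<le> d") (auto simp: mm_def)
  have mm_step: "mm s < mm (Suc s)" if sd: "s \<le> d" for s
  proof -
    consider "s = 0" | "0 < s" "s < d" | "s = d" using sd by linarith
    then show ?thesis
    proof cases
      case 1
      obtain j where "j \<ge> 1" "mm 1 = kk (2 * j)" using mmkk[of 1] d1 by auto
      then have "mm 1 \<ge> 2" using kkge[of "2*j"] by linarith
      then show ?thesis using 1 by (simp add: mm0)
    next
      case 2 then show ?thesis using assms(15) by (auto simp: mm_def)
    next
      case 3 then show ?thesis using assms(17) d1 by (auto simp: mm_def)
    qed
  qed
  have mm_strict: "mm a < mm b" if "a < b" "b \<le> Suc d" for a b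
    using that
  proof (induction b)
    case 0 then show ?case by simp
  next
    case (Suc b)
    then show ?case using mm_step[of b] by (cases "a = b") auto
  qed
  have mm_le_k: "mm s \<le> k" for s
    using mm_strict[of s "Suc d"] by (cases "s \<le> d") (auto simp: mm_def mmd)
  have mm_mono: "mono mm"
  proof (rule monoI)
    fix a b :: nat assume ab: "a \<le> b"
    show "mm a \<le> mm b"
    proof (cases "b \<le> Suc d")
      case True then show ?thesis using mm_strict[of a b] ab by (cases "a = b") auto
    next
      case False then have "mm b = k" by (simp add: mm_def)
      then show ?thesis using mm_le_k[of a] by simp
    qed
  qed
  define B where "B = (\<lambda>s. {mm (s - 1)<..mm s})"
  define blk where "blk = (\<lambda>i. LEAST s. i \<le> mm s)"
  have blk_prop: "blk i \<in> {1..Suc d} \<and> mm (blk i - 1) < i \<and> i \<le> mm (blk i)" if "i \<in> {1..k}" for i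
  proof -
    have ex: "i \<le> mm (Suc d)" using that mmd by simp
    have a: "i \<le> mm (blk i)" unfolding blk_def by (rule LeastI[of _ "Suc d"]) (rule ex)
    have b: "blk i \<le> Suc d" unfolding blk_def by (rule Least_le) (rule ex)
    have c: "blk i \<noteq> 0"
    proof
      assume "blk i = 0" then show False using a that mm0 by simp
    qed
    have "\<not> i \<le> mm (blk i - 1)" unfolding blk_def by (rule not_less_Least) (use c in \<open>simp add: blk_def\<close>)
    then show ?thesis using a b c by auto
  qed
  have blk_unique: "blk i = s" if "s \<in> {1..Suc d}" "mm (s - 1) < i" "i \<le> mm s" for i s
    unfolding blk_def
  proof (rule Least_equality)
    show "i \<le> mm s" by fact
    fix t assume t: "i \<le> mm t"
    show "s \<le> t"
    proof (rule ccontr)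
      assume "\<not> s \<le> t"
      then have "t \<le> s - 1" by simp
      then have "mm t \<le> mm (s - 1)" using mm_mono by (simp add: monoD)
      then show False using t that by simp
    qed
  qed
  have inB: "i \<in> B s \<longleftrightarrow> i \<in> {1..k} \<and> blk i = s" if "s \<in> {1..Suc d}" for i s
  proof
    assume i: "i \<in> B s"
    have "mm s \<le> k" by (rule mm_le_k)
    then have "i \<in> {1..k}" using i unfolding B_def by auto
    moreover have "blk i = s" using blk_unique[OF that] i unfolding B_def by auto
    ultimately show "i \<in> {1..k} \<and> blk i = s" by simp
  next
    assume "i \<in> {1..k} \<and> blk i = s"
    then show "i \<in> B s" using blk_prop[of i] unfolding B_def by auto
  qed
  have psi_mono: "psi e a \<le> psi e b" if "a \<le> b" for a b
    unfolding psi_def by (rule sub_mono1[OF u]) (use that in auto)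
  have psi1: "psi e 1 = 1" using assms(2) unfolding psi_def normalized_basis_def by simp
  have psi_ge1: "psi e a \<ge> 1" if "a \<ge> 1" for a using psi_mono[OF that] psi1 by simp
  define D where "D = real d powr (1/q - inv_ereal_exp p)"
  have expo: "inv_ereal_exp p \<le> 1/q"
  proof (cases "p = \<infinity>")
    case True then show ?thesis using q1 by (simp add: inv_ereal_exp_def)
  next
    case False
    then obtain p' where pe: "p = ereal p'" using qp by (cases p) auto
    then have "q \<le> p'" using qp by simp
    then show ?thesis using pe q1 by (simp add: inv_ereal_exp_def frac_le)
  qed
  have D1: "D \<ge> 1" unfolding D_def using d1 expo by (simp add: ge_one_powr_ge_zero)
  define C where "C = 8 * D / (eps / 4) + 2"
  have C0: "C \<ge> 0" using D1 eps0 by (simp add: C_def)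
  have growth: "psi e (mm (Suc s)) \<ge> C * psi e (mm s) + 1" if sI: "s \<in> {1..d}" for s
  proof -
    obtain j where j: "j \<ge> 1" "mm s = kk (2 * j)" using mmkk[of s] sI by auto
    obtain j' where j': "j' \<ge> 1" "mm (Suc s) = kk (2 * j')" using mmkk[of "Suc s"] sI by auto
    have "mm s < mm (Suc s)" using mm_step sI by simp
    then have "2 * j < 2 * j'" using j j' kkm by (metis strict_mono_less)
    then have le: "2 * j \<le> 2 * j' - 1" and ge: "2 * j' - 1 \<ge> 1" and sc: "Suc (2 * j' - 1) = 2 * j'" by auto
    have A3: "\<forall>j\<ge>1. psi e (kk (Suc j)) \<ge> C * psi e (kk j) + 1"
      using assms(13) unfolding assumptionA_def C_def D_def by simp
    have "psi e (kk (2 * j')) \<ge> C * psi e (kk (2 * j' - 1)) + 1" using A3 ge sc by metis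
    moreover have "psi e (kk (2 * j)) \<le> psi e (kk (2 * j' - 1))"
      using psi_mono kkm le by (simp add: strict_mono_less_eq)
    ultimately show ?thesis using j j' C0 by (smt (verit) mult_left_mono)
  qed
  define v where "v = (\<lambda>n::nat. 1 - real n / real d)"
  have v_rng: "0 \<le> v n \<and> v n \<le> 1" if "n \<le> d" for n
    using that d1 by (simp add: v_def divide_le_eq)
  have vsuc: "v n - v (Suc n) = 1 / real d" for n
    using d1 by (simp add: v_def field_simps)
  have k1: "k \<ge> 1" using assms(17) by simp
  have blk1: "blk 1 = 1" by (rule blk_unique) (use mm_strict[of 0 1] d1 mm0 in auto)
  have blk_le: "blk i - 1 \<le> d" "blk i - 2 \<le> d" if "i \<in> {1..k}" for i
    using blk_prop[OF that] by auto
  define z where "z = (\<lambda>i. if i \<in> {1..k} then v (blk i - 1) else 0)"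
  define wQ where "wQ = (\<lambda>Q i. if i \<in> {1..k} then (if i \<in> Q then v (blk i - 1) else v (blk i - 2)) else 0)"
  have z_sph: "z \<in> pos_sphere_linf k"
  proof (rule sphere_intro[OF k1])
    show "z i = 0" if "i \<notin> {1..k}" for i using that by (auto simp: z_def)
    show "0 \<le> z i \<and> z i \<le> 1" for i using v_rng blk_le(1)[of i] by (simp add: z_def)
    show "z 1 = 1" using k1 blk1 by (simp add: z_def v_def)
  qed
  have w_sph: "wQ Q \<in> pos_sphere_linf k" for Q
  proof (rule sphere_intro[OF k1])
    show "wQ Q i = 0" if "i \<notin> {1..k}" for i using that by (auto simp: wQ_def)
    show "0 \<le> wQ Q i \<and> wQ Q i \<le> 1" for i using v_rng blk_le[of i] by (simp add: wQ_def)
    show "wQ Q 1 = 1" using k1 blk1 by (simp add: wQ_def v_def)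
  qed
  have zw_dist: "dist_inf k z (wQ Q) \<le> 1 / real d" for Q
  proof (rule dist_le[OF k1])
    fix i assume i: "i \<in> {1..k}"
    show "\<bar>z i - wQ Q i\<bar> \<le> 1 / real d"
    proof (cases "i \<in> Q \<or> blk i = 1")
      case True then show ?thesis using i by (auto simp: z_def wQ_def)
    next
      case False
      then have "blk i - 1 = Suc (blk i - 2)" using blk_prop[OF i] by auto
      then have "z i - wQ Q i = - (1 / real d)" using False i vsuc[of "blk i - 2"] by (simp add: z_def wQ_def)
      then show ?thesis by simp
    qed
  qed
  have zvec_eq: "zvec d m = z"
  proof (rule ext)
    fix i
    have ind_eq: "ind {(if s = 1 then 0 else m (s - 1))<..m s} i = (if i \<in> B s then 1 else 0)" if "s \<in> {1..d}" for s
    proof -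
      have "{(if s = 1 then 0 else m (s - 1))<..m s} = B s" using that by (auto simp: B_def mm_def)
      then show ?thesis by (simp add: ind_def)
    qed
    have "zvec d m i = (\<Sum>s=1..d. (1 - (real s - 1) / real d) * ind {(if s = 1 then 0 else m (s - 1))<..m s} i)"
      by (simp add: zvec_def)
    also have "\<dots> = (\<Sum>s=1..d. (1 - (real s - 1) / real d) * (if i \<in> B s then 1 else 0))"
    proof (rule sum.cong[OF refl])
      fix s assume s: "s \<in> {1..d}"
      show "(1 - (real s - 1) / real d) * ind {(if s = 1 then 0 else m (s - 1))<..m s} i =
          (1 - (real s - 1) / real d) * (if i \<in> B s then 1 else 0)"
        by (simp only: ind_eq[OF s])
    qed
    also have "\<dots> = z i"
    proof (cases "i \<in> {1..k}")
      case True
      have "(\<Sum>s=1..d. (1 - (real s - 1) / real d) * (if i \<in> B s then 1 else 0)) =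
          (\<Sum>s\<in>{1..d}. if s = blk i then 1 - (real s - 1) / real d else 0)"
        by (rule sum.cong) (use inB True in auto)
      also have "\<dots> = (if blk i \<in> {1..d} then 1 - (real (blk i) - 1) / real d else 0)"
        by (rule sum.delta) simp
      also have "\<dots> = z i"
      proof (cases "blk i \<in> {1..d}")
        case True2: True
        then have "real (blk i - 1) = real (blk i) - 1" by auto
        then show ?thesis using True True2 by (simp add: z_def v_def)
      next
        case False
        then have "blk i = Suc d" using blk_prop[OF True] by auto
        then show ?thesis using True False d1 by (simp add: z_def v_def)
      qed
      finally show ?thesis .
    next
      case False
      then have "i \<notin> B s" if "s \<in> {1..d}" for s using inB[of s i] that by auto
      then show ?thesis using False by (auto simp: z_def)
    qed
    finally show "zvec d m i = z i" .
  qed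
  define G where "G = F z"
  define om where "om = modulus e k F (1 / real d)"
  have Fsph: "F x \<in> pos_sphere_X e k" if "x \<in> pos_sphere_linf k" for x using assms(18) that by auto
  have Fnn: "F x i \<ge> 0" and Fout: "i \<notin> {1..k} \<Longrightarrow> F x i = 0" and Fnorm: "norm (vec e k (F x)) = 1"
    if "x \<in> pos_sphere_linf k" for x i using Fsph[OF that] unfolding pos_sphere_X_def by auto
  have stepP: "F x i = F x j" if "x \<in> pos_sphere_linf k" "i \<in> {1..k}" "j \<in> {1..k}" "x i = x j" for x i j
    using assms(19) that unfolding step_preserving_def by blast
  have Gconst: "G i = G j" if "s \<in> {1..Suc d}" "i \<in> B s" "j \<in> B s" for s i j
  proof -
    have "i \<in> {1..k}" "j \<in> {1..k}" "blk i = s" "blk j = s" using inB[OF that(1)] that(2,3) by auto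
    then show ?thesis unfolding G_def by (intro stepP[OF z_sph]) (auto simp: z_def)
  qed
  have close: "norm (vec e k G - vec e k (F (wQ Q))) \<le> om" for Q
    unfolding G_def om_def by (rule modulus_bound[OF assms(18) z_sph w_sph zw_dist])
  have om_le: "om \<le> eps / 8" using assms(20) by (simp add: om_def)
  have mdk: "m d < k" using assms(17) .
  have Bfin: "finite (B s)" for s by (simp add: B_def)
  have mm_pos: "mm s \<ge> 1" if "s \<in> {1..Suc d}" for s using mm_strict[of 0 s] that mm0 by auto
  have key: "norm (\<Sum>l\<in>{1..m d} \<inter> Q. G l *\<^sub>R e l) \<le> om + eps / 16"
    if hQ: "\<forall>n. norm (\<Sum>i\<in>{1..n} - Q. e i) \<ge> (psi e n - 1) / 2" for Q
  proof -
    define W where "W = F (wQ Q)"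
    have Wnn: "W l \<ge> 0" for l unfolding W_def by (rule Fnn[OF w_sph])
    have Wnorm: "norm (vec e k W) = 1" unfolding W_def by (rule Fnorm[OF w_sph])
    have NB: "norm (\<Sum>l\<in>B (Suc s) - Q. e l) \<ge> (16 * D / eps) * psi e (mm s)" if sI: "s \<in> {1..d}" for s
    proof -
      have lt: "mm s < mm (Suc s)" using mm_step sI by simp
      have un: "{1..mm (Suc s)} - Q = (B (Suc s) - Q) \<union> ({1..mm s} - Q)"
        using lt by (auto simp: B_def)
      have "(\<Sum>l\<in>{1..mm (Suc s)} - Q. e l) = (\<Sum>l\<in>B (Suc s) - Q. e l) + (\<Sum>l\<in>{1..mm s} - Q. e l)"
        unfolding un by (rule sum.union_disjoint) (auto simp: B_def)
      then have t: "norm (\<Sum>l\<in>{1..mm (Suc s)} - Q. e l) \<le> norm (\<Sum>l\<in>B (Suc s) - Q. e l) + norm (\<Sum>l\<in>{1..mm s} - Q. e l)"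
        by (metis norm_triangle_ineq)
      have p1: "norm (\<Sum>l\<in>{1..mm s} - Q. e l) \<le> psi e (mm s)" unfolding psi_def by (rule sub_mono1[OF u]) auto
      have p2: "norm (\<Sum>l\<in>{1..mm (Suc s)} - Q. e l) \<ge> (psi e (mm (Suc s)) - 1) / 2" using hQ by blast
      have p3: "psi e (mm (Suc s)) \<ge> C * psi e (mm s) + 1" by (rule growth[OF sI])
      have p4: "(16 * D / eps) * psi e (mm s) = C * psi e (mm s) / 2 - psi e (mm s)"
        using eps0 by (simp add: C_def field_simps)
      have gen: "\<And>a b c dd f g::real. a \<le> b + c \<Longrightarrow> c \<le> f \<Longrightarrow> (dd - 1) / 2 \<le> a \<Longrightarrow> g + 1 \<le> dd \<Longrightarrow> g / 2 - f \<le> b"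
        by (simp add: field_simps)
      show ?thesis unfolding p4 by (rule gen[OF t p1 p2 p3])
    qed
    have NBpos: "norm (\<Sum>l\<in>B (Suc s) - Q. e l) > 0" if sI: "s \<in> {1..d}" for s
    proof -
      have "psi e (mm s) \<ge> 1" using psi_ge1 mm_pos sI by simp
      moreover have "16 * D / eps > 0" using D1 eps0 by simp
      ultimately have "(16 * D / eps) * psi e (mm s) > 0" by (intro mult_pos_pos) auto
      then show ?thesis using NB[OF sI] by linarith
    qed
    have nonempty: "\<exists>l. l \<in> B (Suc s) - Q" if sI: "s \<in> {1..d}" for s
    proof (rule ccontr)
      assume "\<not> (\<exists>l. l \<in> B (Suc s) - Q)"
      then have "B (Suc s) - Q = {}" by blast
      then have "(\<Sum>l\<in>B (Suc s) - Q. e l) = 0" by (simp only: sum.empty)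
      then show False using NBpos[OF sI] by simp
    qed
    define js where "js = (\<lambda>s. SOME l. l \<in> B (Suc s) - Q)"
    have js: "js s \<in> B (Suc s) - Q" if "s \<in> {1..d}" for s
      unfolding js_def using nonempty[OF that] by (rule someI_ex)
    define c where "c = (\<lambda>s. W (js s))"
    have cnn: "c s \<ge> 0" for s by (simp add: c_def Wnn)
    have jsprop: "js s \<in> {1..k} \<and> blk (js s) = Suc s \<and> js s \<notin> Q" if sI: "s \<in> {1..d}" for s
      using js[OF sI] inB[of "Suc s" "js s"] sI by auto
    have W1: "W l = c s" if sI: "s \<in> {1..d}" and l: "l \<in> B s \<inter> Q" for s l
    proof -
      have lp: "l \<in> {1..k}" "blk l = s" "l \<in> Q" using inB[of s l] sI l by auto
      have "wQ Q l = wQ Q (js s)" using lp jsprop[OF sI] sI by (simp add: wQ_def)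
      then show ?thesis unfolding W_def c_def using lp jsprop[OF sI] by (intro stepP[OF w_sph]) auto
    qed
    have W2: "W l = c s" if sI: "s \<in> {1..d}" and l: "l \<in> B (Suc s) - Q" for s l
    proof -
      have lp: "l \<in> {1..k}" "blk l = Suc s" "l \<notin> Q" using inB[of "Suc s" l] sI l by auto
      have "wQ Q l = wQ Q (js s)" using lp jsprop[OF sI] sI by (simp add: wQ_def)
      then show ?thesis unfolding W_def c_def using lp jsprop[OF sI] by (intro stepP[OF w_sph]) auto
    qed
    have split: "(\<Sum>l\<in>{1..m d} \<inter> Q. G l *\<^sub>R e l) = (\<Sum>l\<in>{1..m d} \<inter> Q. (G l - W l) *\<^sub>R e l) + (\<Sum>l\<in>{1..m d} \<inter> Q. W l *\<^sub>R e l)"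
      by (simp add: sum.distrib[symmetric] scaleR_add_left[symmetric])
    have T1: "norm (\<Sum>l\<in>{1..m d} \<inter> Q. (G l - W l) *\<^sub>R e l) \<le> om"
    proof -
      have eq: "vec e k G - vec e k W = (\<Sum>l\<in>{1..k}. (G l - W l) *\<^sub>R e l)"
        by (simp add: vec_def sum_subtractf scaleR_diff_left)
      have "norm (\<Sum>l\<in>{1..m d} \<inter> Q. (G l - W l) *\<^sub>R e l) \<le> norm (\<Sum>l\<in>{1..k}. (G l - W l) *\<^sub>R e l)"
        by (rule sub_mono[OF u]) (use mdk in auto)
      then show ?thesis using close[of Q] eq by (simp add: W_def)
    qed
    define xs where "xs = (\<lambda>i. c (Suc i) *\<^sub>R (\<Sum>l\<in>B (Suc i) \<inter> Q. e l))"
    define xl where "xl = (\<lambda>i. c (Suc i) *\<^sub>R (\<Sum>l\<in>B (Suc (Suc i)) - Q. e l))"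
    have Bdisj: "B s \<inter> B t = {}" if "s \<in> {1..Suc d}" "t \<in> {1..Suc d}" "s \<noteq> t" for s t
      using that(3) by (auto simp add: disjoint_iff inB[OF that(1)] inB[OF that(2)])
    have BdisjS: "i = j" if "x \<in> B (Suc i)" "x \<in> B (Suc j)" "i < d" "j < d" for x i j
      using Bdisj[of "Suc i" "Suc j"] that by auto
    have BdisjSS: "i = j" if "x \<in> B (Suc (Suc i))" "x \<in> B (Suc (Suc j))" "i < d" "j < d" for x i j
      using Bdisj[of "Suc (Suc i)" "Suc (Suc j)"] that by auto
    have U1: "{1..m d} \<inter> Q = (\<Union>i\<in>{..<d}. B (Suc i) \<inter> Q)"
    proof (rule set_eqI, rule iffI)
      fix l assume l: "l \<in> {1..m d} \<inter> Q"
      then have lk: "l \<in> {1..k}" using mdk by auto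
      have "blk l \<le> d" unfolding blk_def by (rule Least_le) (use l mmD in auto)
      moreover have "blk l \<ge> 1" using blk_prop[OF lk] by auto
      ultimately have "blk l - 1 \<in> {..<d}" "Suc (blk l - 1) = blk l" by auto
      moreover have "l \<in> B (blk l)" using inB[of "blk l" l] lk blk_prop[OF lk] by auto
      ultimately show "l \<in> (\<Union>i\<in>{..<d}. B (Suc i) \<inter> Q)" using l by (metis (no_types, lifting) IntD2 IntI UN_I)
    next
      fix l assume "l \<in> (\<Union>i\<in>{..<d}. B (Suc i) \<inter> Q)"
      then obtain i where i: "i < d" "l \<in> B (Suc i)" "l \<in> Q" by auto
      have "mm (Suc i) \<le> mm d" using mm_mono i(1) by (simp add: monoD)
      then show "l \<in> {1..m d} \<inter> Q" using i mmD by (auto simp: B_def)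
    qed
    have sumW: "(\<Sum>l\<in>{1..m d} \<inter> Q. W l *\<^sub>R e l) = (\<Sum>i<d. xs i)"
    proof -
      have "(\<Sum>l\<in>{1..m d} \<inter> Q. W l *\<^sub>R e l) = (\<Sum>i\<in>{..<d}. (\<Sum>l\<in>B (Suc i) \<inter> Q. W l *\<^sub>R e l))"
        unfolding U1 by (rule sum.UNION_disjoint) (use Bfin BdisjS in blast)+
      also have "\<dots> = (\<Sum>i<d. xs i)"
      proof (rule sum.cong[OF refl])
        fix i assume i: "i \<in> {..<d}"
        have "(\<Sum>l\<in>B (Suc i) \<inter> Q. W l *\<^sub>R e l) = (\<Sum>l\<in>B (Suc i) \<inter> Q. c (Suc i) *\<^sub>R e l)"
          by (rule sum.cong[OF refl]) (use W1[of "Suc i"] i in auto)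
        then show "(\<Sum>l\<in>B (Suc i) \<inter> Q. W l *\<^sub>R e l) = xs i" by (simp add: xs_def scaleR_sum_right)
      qed
      finally show ?thesis .
    qed
    have bs1: "block_seq e d xs"
      unfolding block_seq_def
    proof (intro exI[of _ mm] conjI allI impI)
      show "mono mm" by (rule mm_mono)
      fix i assume "i < d"
      have "xs i = (\<Sum>l\<in>B (Suc i) \<inter> Q. c (Suc i) *\<^sub>R e l)" by (simp add: xs_def scaleR_sum_right)
      also have "\<dots> \<in> span (e ` {mm i<..mm (Suc i)})" by (rule block_in_span) (auto simp: B_def)
      finally show "xs i \<in> span (e ` {mm i<..mm (Suc i)})" .
    qed
    have bs2: "block_seq e d xl"
      unfolding block_seq_def
    proof (intro exI[of _ "\<lambda>i. mm (Suc i)"] conjI allI impI)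
      show "mono (\<lambda>i. mm (Suc i))" using mm_mono by (auto simp: mono_def)
      fix i assume "i < d"
      have "xl i = (\<Sum>l\<in>B (Suc (Suc i)) - Q. c (Suc i) *\<^sub>R e l)" by (simp add: xl_def scaleR_sum_right)
      also have "\<dots> \<in> span (e ` {mm (Suc i)<..mm (Suc (Suc i))})" by (rule block_in_span) (auto simp: B_def)
      finally show "xl i \<in> span (e ` {mm (Suc i)<..mm (Suc (Suc i))})" .
    qed
    have up: "norm (\<Sum>i<d. xs i) \<le> (\<Sum>i<d. norm (xs i) powr q) powr (1/q)"
      using assms(8) bs1 unfolding upper_estimate_def by blast
    have xlsum: "norm (\<Sum>i<d. xl i) \<le> 1"
    proof -
      have "(\<Sum>i<d. xl i) = (\<Sum>i\<in>{..<d}. (\<Sum>l\<in>B (Suc (Suc i)) - Q. W l *\<^sub>R e l))"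
      proof (rule sum.cong[OF refl])
        fix i assume i: "i \<in> {..<d}"
        have "(\<Sum>l\<in>B (Suc (Suc i)) - Q. W l *\<^sub>R e l) = (\<Sum>l\<in>B (Suc (Suc i)) - Q. c (Suc i) *\<^sub>R e l)"
          by (rule sum.cong[OF refl]) (use W2[of "Suc i"] i in auto)
        then show "xl i = (\<Sum>l\<in>B (Suc (Suc i)) - Q. W l *\<^sub>R e l)" by (simp add: xl_def scaleR_sum_right)
      qed
      also have "\<dots> = (\<Sum>l\<in>(\<Union>i\<in>{..<d}. B (Suc (Suc i)) - Q). W l *\<^sub>R e l)"
        by (rule sum.UNION_disjoint[symmetric]) (use Bfin BdisjSS in blast)+
      finally have eq: "(\<Sum>i<d. xl i) = (\<Sum>l\<in>(\<Union>i\<in>{..<d}. B (Suc (Suc i)) - Q). W l *\<^sub>R e l)" .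
      have sub: "(\<Union>i\<in>{..<d}. B (Suc (Suc i)) - Q) \<subseteq> {1..k}"
      proof
        fix l assume "l \<in> (\<Union>i\<in>{..<d}. B (Suc (Suc i)) - Q)"
        then obtain i where "i < d" "l \<in> B (Suc (Suc i))" by auto
        then show "l \<in> {1..k}" using inB[of "Suc (Suc i)" l] by auto
      qed
      have "norm (\<Sum>l\<in>(\<Union>i\<in>{..<d}. B (Suc (Suc i)) - Q). W l *\<^sub>R e l) \<le> norm (\<Sum>l\<in>{1..k}. W l *\<^sub>R e l)"
        by (rule sub_mono[OF u sub]) auto
      then show ?thesis using eq Wnorm by (simp add: vec_def)
    qed
    have lowD: "(\<Sum>i<d. norm (xl i) powr q) powr (1/q) \<le> D"
      unfolding D_def by (rule lower_to_D[OF assms(7) qp q1 bs2 d1 xlsum])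
    have cmp: "0 \<le> norm (xs i) \<and> norm (xs i) \<le> (eps / (16 * D)) * norm (xl i)" if i: "i \<in> {..<d}" for i
    proof -
      have sI: "Suc i \<in> {1..d}" using i by auto
      have a1: "norm (xs i) = c (Suc i) * norm (\<Sum>l\<in>B (Suc i) \<inter> Q. e l)" using cnn by (simp add: xs_def)
      have a2: "norm (xl i) = c (Suc i) * norm (\<Sum>l\<in>B (Suc (Suc i)) - Q. e l)" using cnn by (simp add: xl_def)
      have b1: "norm (\<Sum>l\<in>B (Suc i) \<inter> Q. e l) \<le> psi e (mm (Suc i))"
        unfolding psi_def by (rule sub_mono1[OF u]) (auto simp: B_def)
      have b2: "psi e (mm (Suc i)) \<le> (eps / (16 * D)) * norm (\<Sum>l\<in>B (Suc (Suc i)) - Q. e l)"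
        using NB[OF sI] eps0 D1 by (simp add: field_simps)
      have "norm (xs i) \<le> c (Suc i) * ((eps / (16 * D)) * norm (\<Sum>l\<in>B (Suc (Suc i)) - Q. e l))"
        unfolding a1 by (rule mult_left_mono) (use b1 b2 cnn in auto)
      then show ?thesis using a2 by (simp add: mult_ac)
    qed
    have q0: "q > 0" using q1 by simp
    have "(\<Sum>i<d. norm (xs i) powr q) powr (1/q) \<le> (\<Sum>i<d. ((eps / (16 * D)) * norm (xl i)) powr q) powr (1/q)"
      by (rule sum_powr_mono[OF cmp q0])
    also have "\<dots> = (eps / (16 * D)) * (\<Sum>i<d. norm (xl i) powr q) powr (1/q)"
      by (rule sum_powr_scale) (use eps0 D1 q0 in auto)
    also have "\<dots> \<le> (eps / (16 * D)) * D"
      by (rule mult_left_mono[OF lowD]) (use eps0 D1 in auto)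
    also have "\<dots> = eps / 16" using D1 by simp
    finally have T2: "norm (\<Sum>l\<in>{1..m d} \<inter> Q. W l *\<^sub>R e l) \<le> eps / 16" using up sumW by simp
    show ?thesis using split T1 T2 norm_triangle_ineq
      by (smt (verit))
  qed
  have hA: "\<forall>n. psiP e P n \<ge> (psi e n - 1) / 2" using assms(13) unfolding assumptionA_def by blast
  have keyP: "norm (\<Sum>l\<in>{1..m d} \<inter> P. G l *\<^sub>R e l) \<le> om + eps / 16"
  proof (rule key)
    show "\<forall>n. norm (\<Sum>i\<in>{1..n} - P. e i) \<ge> (psi e n - 1) / 2"
      using hA unfolding psiP_def by (meson min.boundedE)
  qed
  have keyN: "norm (\<Sum>l\<in>{1..m d} \<inter> - P. G l *\<^sub>R e l) \<le> om + eps / 16"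
  proof (rule key)
    have "{1..n} - - P = {1..n} \<inter> P" for n by auto
    then show "\<forall>n. norm (\<Sum>i\<in>{1..n} - - P. e i) \<ge> (psi e n - 1) / 2"
      using hA unfolding psiP_def by (metis min.boundedE)
  qed
  define Y where "Y = (\<Sum>l\<in>{1..m d}. G l *\<^sub>R e l)"
  have "Y = (\<Sum>l\<in>{1..m d} \<inter> P. G l *\<^sub>R e l) + (\<Sum>l\<in>{1..m d} - P. G l *\<^sub>R e l)"
    unfolding Y_def by (rule sum.Int_Diff) simp
  moreover have "{1..m d} - P = {1..m d} \<inter> - P" by auto
  ultimately have "Y = (\<Sum>l\<in>{1..m d} \<inter> P. G l *\<^sub>R e l) + (\<Sum>l\<in>{1..m d} \<inter> - P. G l *\<^sub>R e l)" by simp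
  then have Ybd: "norm Y \<le> 2 * (om + eps / 16)"
    using keyP keyN norm_triangle_ineq by (smt (verit))
  define a where "a = G k"
  define SB where "SB = (\<Sum>l\<in>{m d<..k}. e l)"
  define SR where "SR = (\<Sum>l\<in>{1..m d}. e l)"
  have Bd: "{m d<..k} = B (Suc d)" by (simp add: B_def mmd mmD)
  have kB: "k \<in> B (Suc d)" using mdk Bd by auto
  have Ga: "G l = a" if "l \<in> {m d<..k}" for l
    unfolding a_def by (rule Gconst[of "Suc d"]) (use that Bd kB in auto)
  have decomp: "{1..k} = {1..m d} \<union> {m d<..k}" using mdk by auto
  have "(\<Sum>l\<in>{m d<..k}. G l *\<^sub>R e l) = (\<Sum>l\<in>{m d<..k}. a *\<^sub>R e l)"
    by (rule sum.cong[OF refl]) (simp add: Ga)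
  then have aSBeq: "a *\<^sub>R SB = (\<Sum>l\<in>{m d<..k}. G l *\<^sub>R e l)" by (simp add: SB_def scaleR_sum_right)
  have vecG: "vec e k G = Y + a *\<^sub>R SB"
  proof -
    have "vec e k G = (\<Sum>l\<in>{1..m d} \<union> {m d<..k}. G l *\<^sub>R e l)" unfolding vec_def decomp[symmetric] by simp
    also have "\<dots> = Y + (\<Sum>l\<in>{m d<..k}. G l *\<^sub>R e l)" unfolding Y_def by (rule sum.union_disjoint) auto
    finally show ?thesis using aSBeq by simp
  qed
  have sumE: "(\<Sum>i=1..k. e i) = SR + SB"
  proof -
    have "(\<Sum>i=1..k. e i) = (\<Sum>l\<in>{1..m d} \<union> {m d<..k}. e l)" using decomp by simp
    also have "\<dots> = SR + SB" unfolding SR_def SB_def by (rule sum.union_disjoint) auto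
    finally show ?thesis .
  qed
  have Gnorm: "norm (vec e k G) = 1" unfolding G_def by (rule Fnorm[OF z_sph])
  have aSB: "norm (a *\<^sub>R SB) \<le> 1"
  proof -
    have "norm (\<Sum>l\<in>{m d<..k}. G l *\<^sub>R e l) \<le> norm (\<Sum>l\<in>{1..k}. G l *\<^sub>R e l)"
      by (rule sub_mono[OF u]) auto
    then show ?thesis using aSBeq Gnorm by (simp add: vec_def)
  qed
  have a0: "a \<ge> 0" unfolding a_def G_def by (rule Fnn[OF z_sph])
  have psik: "psi e k = norm (SR + SB)" unfolding psi_def using sumE by simp
  have SRn: "norm SR = psi e (m d)" by (simp add: SR_def psi_def)
  have SB2: "norm SB \<le> psi e k" unfolding SB_def psi_def by (rule sub_mono1[OF u]) auto
  have SB1: "psi e k - psi e (m d) \<le> norm SB" using psik SRn norm_triangle_ineq[of SR SB] by simp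
  have pk: "psi e k > 0" using psi_ge1[OF k1] by simp
  have fin: "norm ((Y + a *\<^sub>R SB) - (1 / psi e k) *\<^sub>R (SR + SB)) \<le> 2 * (2 * (om + eps / 16)) + 2 * (psi e (m d) / psi e k)"
    by (rule final_ineq[OF a0 _ aSB Ybd _ pk SB1 SB2]) (use vecG Gnorm SRn in auto)
  have ratio: "psi e (m d) / psi e k \<le> eps / 32"
  proof -
    have g: "psi e k \<ge> C * psi e (m d) + 1" using growth[of d] d1 mmd mmD by simp
    have C32: "C \<ge> 32 / eps" using D1 eps0 by (simp add: C_def field_simps)
    have pm0: "psi e (m d) \<ge> 0" by (simp add: psi_def)
    have "(32 / eps) * psi e (m d) \<le> C * psi e (m d)" by (rule mult_right_mono[OF C32 pm0])
    then have "(32 / eps) * psi e (m d) \<le> psi e k" using g by linarith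
    then have "32 * psi e (m d) \<le> eps * psi e k" using eps0 by (simp add: field_simps)
    then show ?thesis using pk eps0 by (simp add: field_simps)
  qed
  have eqf: "norm (vec e k G - (1 / psi e k) *\<^sub>R (\<Sum>i=1..k. e i)) = norm ((Y + a *\<^sub>R SB) - (1 / psi e k) *\<^sub>R (SR + SB))"
    by (simp only: vecG sumE)
  have "norm (vec e k G - (1 / psi e k) *\<^sub>R (\<Sum>i=1..k. e i)) \<le> eps"
    unfolding eqf by (rule arith_fin[OF fin ratio om_le eps0])
  then show ?thesis using zvec_eq by (simp add: G_def)
qed


end
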